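(* Let $\pi\in\mathsf{G}_{r,n}$ and $a=\text{A-code}(\pi)$. Then, for each $0\le t\le r-1$, (1) $\mathsf{Rmil}(\pi)=\mathsf{Max}(a)$ and $\mathsf{Rmil}^t(\pi)=\mathsf{Max}^t(a)$; (2) $\mathsf{Lmil}(\pi)=\mathsf{Min}(a)$ and $\mathsf{Lmil}^t(\pi)=\mathsf{Min}^t(a)$; (3) $\mathsf{Lmap}(\pi)=\mathsf{Rmil}(a)$ and $\mathsf{Lmap}^t(\pi)=\mathsf{Rmil}^t(a)$; (4) $\mathsf{Lmal}(\pi)=\mathsf{Rmip}(a)$ and $\mathsf{Lmal}^t(\pi)=\mathsf{Rmip}^t(a)$.
   Context: $\mathsf{G}_{r,n}=C_r\wr\mathfrak S_n$: elements are words $\pi=\sigma_1^{[z_1]}\cdots\sigma_n^{[z_n]}$ with $\sigma\in\mathfrak S_n$ (base values) and colors $z_i\in\{0,\dots,r-1\}$. A-code: set $\pi^{(n)}=\pi$; for $j=n,\dots,1$, if the letter with base value $j$ is at position $p$ of $\pi^{(j)}$ with color $t$, put $c_j=p$, $e_j=t$, and delete that letter to get $\pi^{(j-1)}$; $\text{A-code}(\pi)=(c_1^{[e_1]},\dots,c_n^{[e_n]})$. Statistics of $\pi$: $\mathsf{Rmil}(\pi)=\{\sigma_i^{[z_i]}:\sigma_i<\sigma_j\ \forall j>i\}$; $\mathsf{Lmil}(\pi)=\{\sigma_i^{[z_i]}:\sigma_i<\sigma_j\ \forall j<i\}$; $\mathsf{Lmal}(\pi)=\{\sigma_i^{[z_i]}:\sigma_i>\sigma_j\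 \forall j<i\}$; $\mathsf{Lmap}(\pi)=\{i^{[z_i]}:\sigma_i>\sigma_j\ \forall j<i\}$. Statistics of a sequence $a=(c_1^{[e_1]},\dots,c_n^{[e_n]})$: $\mathsf{Max}(a)=\{i^{[e_i]}:c_i=i\}$; $\mathsf{Min}(a)=\{i^{[e_i]}:c_i=1\}$; $\mathsf{Rmil}(a)=\{c_i^{[e_i]}:c_i<c_j\ \forall j>i\}$; $\mathsf{Rmip}(a)=\{i^{[e_i]}:c_i<c_j\ \forall j>i\}$. For any such set $S$ of colored letters and $t\in\{0,\dots,r-1\}$, $S^t:=\{k: k^{[t]}\in S\}$ (e.g. $\mathsf{Rmil}^t(\pi)$, $\mathsf{Max}^t(a)$). *)

theory Defs
  imports Main
begin

text \<open>A colored letter k^[t] is the pair (k, t). An element of G_{r,n} is a word,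
  represented as a list of colored letters (sigma_i, z_i), i = 1..n (list index i-1).\<close>

definition colored_perm :: "nat \<Rightarrow> nat \<Rightarrow> (nat \<times> nat) list \<Rightarrow> bool" where
  "colored_perm r n w \<longleftrightarrow> length w = n \<and> distinct (map fst w) \<and>
     set (map fst w) = {1..n} \<and> (\<forall>x\<in>set w. snd x < r)"

text \<open>0-based position of the letter with base value v.\<close>
definition pos_of :: "(nat \<times> nat) list \<Rightarrow> nat \<Rightarrow> nat" where
  "pos_of w v = (LEAST i. i < length w \<and> fst (w ! i) = v)"

definition del_at :: "nat \<Rightarrow> 'a list \<Rightarrow> 'a list" where
  "del_at p w = take p w @ drop (Suc p) w"

text \<open>acode_aux w j: given pi^(j) = w, returns (c_1^[e_1], ..., c_j^[e_j]).\<close>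
fun acode_aux :: "(nat \<times> nat) list \<Rightarrow> nat \<Rightarrow> (nat \<times> nat) list" where
  "acode_aux w 0 = []"
| "acode_aux w (Suc j) =
     (let p = pos_of w (Suc j)
      in acode_aux (del_at p w) j @ [(Suc p, snd (w ! p))])"

definition acode :: "(nat \<times> nat) list \<Rightarrow> (nat \<times> nat) list" where
  "acode w = acode_aux w (length w)"

text \<open>Statistics of a word pi (positions i are 1-based: list index k corresponds to i = k+1).\<close>
definition Rmil_w :: "(nat \<times> nat) list \<Rightarrow> (nat \<times> nat) set" where
  "Rmil_w w = {w ! k | k. k < length w \<and> (\<forall>j. k < j \<and> j < length w \<longrightarrow> fst (w ! k) < fst (w ! j))}"

definition Lmil_w :: "(nat \<times> nat) list \<Rightarrow> (nat \<times> nat) set" where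
  "Lmil_w w = {w ! k | k. k < length w \<and> (\<forall>j<k. fst (w ! k) < fst (w ! j))}"

definition Lmal_w :: "(nat \<times> nat) list \<Rightarrow> (nat \<times> nat) set" where
  "Lmal_w w = {w ! k | k. k < length w \<and> (\<forall>j<k. fst (w ! k) > fst (w ! j))}"

definition Lmap_w :: "(nat \<times> nat) list \<Rightarrow> (nat \<times> nat) set" where
  "Lmap_w w = {(Suc k, snd (w ! k)) | k. k < length w \<and> (\<forall>j<k. fst (w ! k) > fst (w ! j))}"

text \<open>Statistics of a sequence a = (c_1^[e_1], ..., c_n^[e_n]) (list index k is i = k+1).\<close>
definition Max_s :: "(nat \<times> nat) list \<Rightarrow> (nat \<times> nat) set" where
  "Max_s a = {(Suc k, snd (a ! k)) | k. k < length a \<and> fst (a ! k) = Suc k}"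

definition Min_s :: "(nat \<times> nat) list \<Rightarrow> (nat \<times> nat) set" where
  "Min_s a = {(Suc k, snd (a ! k)) | k. k < length a \<and> fst (a ! k) = 1}"

definition Rmil_s :: "(nat \<times> nat) list \<Rightarrow> (nat \<times> nat) set" where
  "Rmil_s a = {a ! k | k. k < length a \<and> (\<forall>j. k < j \<and> j < length a \<longrightarrow> fst (a ! k) < fst (a ! j))}"

definition Rmip_s :: "(nat \<times> nat) list \<Rightarrow> (nat \<times> nat) set" where
  "Rmip_s a = {(Suc k, snd (a ! k)) | k. k < length a \<and> (\<forall>j. k < j \<and> j < length a \<longrightarrow> fst (a ! k) < fst (a ! j))}"

definition col_part :: "(nat \<times> nat) set \<Rightarrow> nat \<Rightarrow> nat set" where
  "col_part S t = {k. (k, t) \<in> S}"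

end

theory Submission imports Defs begin

lemma pos_of_props:
  assumes "distinct (map fst w)" "v \<in> set (map fst w)"
  shows "pos_of w v < length w \<and> fst (w ! pos_of w v) = v"
proof -
  from assms(2) obtain i where "i < length w" "fst (w!i) = v"
    by (auto simp: in_set_conv_nth)
  then show ?thesis unfolding pos_of_def by (metis (mono_tags, lifting) LeastI)
qed

lemma del_at_nth:
  assumes "p < length w" "i < length w - 1"
  shows "del_at p w ! i = (if i < p then w ! i else w ! Suc i)"
  using assms by (auto simp: del_at_def nth_append min_def)

lemma del_at_length: "p < length w \<Longrightarrow> length (del_at p w) = length w - 1"
  by (auto simp: del_at_def)

lemma del_at_map: "map f (del_at p w) = del_at p (map f w)"
  by (simp add: del_at_def take_map drop_map)

lemma del_at_distinct_set:
  assumes "distinct w" "p < length w"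
  shows "distinct (del_at p w) \<and> set (del_at p w) = set w - {w ! p}"
proof -
  obtain xs x ys where w: "w = xs @ x # ys" "length xs = p"
    using assms(2) by (metis id_take_nth_drop length_take min_absorb2 less_imp_le_nat)
  then have "del_at p w = xs @ ys" "w ! p = x" by (auto simp: del_at_def)
  then show ?thesis using assms(1) w by auto
qed

definition T :: "(nat \<times> nat) list \<Rightarrow> (nat \<times> nat \<times> nat) set" where
  "T v = {(fst (v!q), Suc q, snd (v!q)) | q. q < length v \<and> (\<forall>j<q. fst (v!j) < fst (v!q))}"

locale stp =
  fixes w w' :: "(nat \<times> nat) list" and m p :: nat
  assumes lw: "length w = Suc m" and lw': "length w' = m" and pm: "p \<le> m"
  and nth': "\<And>i. i < m \<Longrightarrow> w' ! i = w ! (if i < p then i else Suc i)"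
  and big: "fst (w ! p) = Suc m"
  and small: "\<And>i. i < Suc m \<Longrightarrow> i \<noteq> p \<Longrightarrow> fst (w ! i) < Suc m"
begin

lemma bk: "i < Suc m \<Longrightarrow> i \<noteq> p \<Longrightarrow> w ! i = w' ! (if i < p then i else i - 1) \<and> (if i < p then i else i - 1) < m"
  using nth'[of "if i < p then i else i - 1"] pm by (cases "i < p") auto

lemma Rmil_step: "Rmil_w w = Rmil_w w' \<union> (if p = m then {w!p} else {})"
proof (rule set_eqI, rule iffI)
  fix x assume "x \<in> Rmil_w w"
  then obtain k where k: "k < Suc m" "x = w ! k" and c: "\<forall>j. k < j \<and> j < Suc m \<longrightarrow> fst (w ! k) < fst (w ! j)"
    unfolding Rmil_w_def lw by blast
  show "x \<in> Rmil_w w' \<union> (if p = m then {w!p} else {})"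
  proof (cases "k = p")
    case True
    have "p = m"
    proof (rule ccontr)
      assume "p \<noteq> m" then have "p < m" using pm by simp
      then show False using c[rule_format, of m] True big small[of m] \<open>p \<noteq> m\<close> by auto
    qed
    then show ?thesis using True k by simp
  next
    case False
    let ?k = "if k < p then k else k - 1"
    have kk: "w ! k = w' ! ?k" "?k < m" using bk[OF k(1) False] by auto
    have "\<forall>j. ?k < j \<and> j < m \<longrightarrow> fst (w' ! ?k) < fst (w' ! j)"
    proof (intro allI impI)
      fix j assume j: "?k < j \<and> j < m"
      have "k < (if j < p then j else Suc j)" using j False by (auto split: if_splits)
      moreover have "(if j < p then j else Suc j) < Suc m" using j by auto
      ultimately show "fst (w' ! ?k) < fst (w' ! j)" using c kk nth'[of j] j by auto
    qed
    then have "x \<in> Rmil_w w'" unfolding Rmil_w_def lw' using kk k by blast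
    then show ?thesis by simp
  qed
next
  fix x assume "x \<in> Rmil_w w' \<union> (if p = m then {w!p} else {})"
  then consider "x \<in> Rmil_w w'" | "p = m" "x = w ! p" by (auto split: if_splits)
  then show "x \<in> Rmil_w w"
  proof cases
    case 2
    then show ?thesis unfolding Rmil_w_def lw by auto
  next
    case 1
    then obtain k where k: "k < m" "x = w' ! k" and c: "\<forall>j. k < j \<and> j < m \<longrightarrow> fst (w' ! k) < fst (w' ! j)"
      unfolding Rmil_w_def lw' by blast
    let ?k = "if k < p then k else Suc k"
    have kk: "x = w ! ?k" "?k < Suc m" "?k \<noteq> p" using k nth' by auto
    have "\<forall>j. ?k < j \<and> j < Suc m \<longrightarrow> fst (w ! ?k) < fst (w ! j)"
    proof (intro allI impI)
      fix j assume j: "?k < j \<and> j < Suc m"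
      show "fst (w ! ?k) < fst (w ! j)"
      proof (cases "j = p")
        case True then show ?thesis using big small kk by auto
      next
        case False
        let ?j = "if j < p then j else j - 1"
        have "w ! j = w' ! ?j" "?j < m" using bk[of j] j False by auto
        moreover have "k < ?j" using j False by (auto split: if_splits)
        ultimately show ?thesis using c kk k by auto
      qed
    qed
    then show ?thesis unfolding Rmil_w_def lw using kk by blast
  qed
qed

lemma Lmil_step: "Lmil_w w = Lmil_w w' \<union> (if p = 0 then {w!p} else {})"
proof (rule set_eqI, rule iffI)
  fix x assume "x \<in> Lmil_w w"
  then obtain k where k: "k < Suc m" "x = w ! k" and c: "\<forall>j<k. fst (w ! k) < fst (w ! j)"
    unfolding Lmil_w_def lw by blast
  show "x \<in> Lmil_w w' \<union> (if p = 0 then {w!p} else {})"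
  proof (cases "k = p")
    case True
    have "p = 0"
    proof (rule ccontr)
      assume "p \<noteq> 0"
      then show False using c[rule_format, of 0] True big small[of 0] pm by auto
    qed
    then show ?thesis using True k by simp
  next
    case False
    let ?k = "if k < p then k else k - 1"
    have kk: "w ! k = w' ! ?k" "?k < m" using bk[OF k(1) False] by auto
    have "\<forall>j<?k. fst (w' ! ?k) < fst (w' ! j)"
    proof (intro allI impI)
      fix j assume j: "j < ?k"
      have "(if j < p then j else Suc j) < k" using j False by (auto split: if_splits)
      moreover have "j < m" using j kk by auto
      ultimately show "fst (w' ! ?k) < fst (w' ! j)" using c kk nth'[of j] j by auto
    qed
    then have "x \<in> Lmil_w w'" unfolding Lmil_w_def lw' using kk k by blast
    then show ?thesis by simp
  qed
next
  fix x assume "x \<in> Lmil_w w' \<union> (if p = 0 then {w!p} else {})"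
  then consider "x \<in> Lmil_w w'" | "p = 0" "x = w ! p" by (auto split: if_splits)
  then show "x \<in> Lmil_w w"
  proof cases
    case 2
    then show ?thesis unfolding Lmil_w_def lw by auto
  next
    case 1
    then obtain k where k: "k < m" "x = w' ! k" and c: "\<forall>j<k. fst (w' ! k) < fst (w' ! j)"
      unfolding Lmil_w_def lw' by blast
    let ?k = "if k < p then k else Suc k"
    have kk: "x = w ! ?k" "?k < Suc m" "?k \<noteq> p" using k nth' by auto
    have "\<forall>j<?k. fst (w ! ?k) < fst (w ! j)"
    proof (intro allI impI)
      fix j assume j: "j < ?k"
      show "fst (w ! ?k) < fst (w ! j)"
      proof (cases "j = p")
        case True then show ?thesis using big small kk by auto
      next
        case False
        let ?j = "if j < p then j else j - 1"
        have "w ! j = w' ! ?j" "?j < m" using bk[of j] j kk False by auto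
        moreover have "?j < k" using j False by (auto split: if_splits)
        ultimately show ?thesis using c kk k by auto
      qed
    qed
    then show ?thesis unfolding Lmil_w_def lw using kk by blast
  qed
qed

lemma T_step: "T w = {x \<in> T w'. fst (snd x) \<le> p} \<union> {(Suc m, Suc p, snd (w!p))}"
proof (rule set_eqI, rule iffI)
  fix x assume "x \<in> T w"
  then obtain q where q: "q < Suc m" "x = (fst (w!q), Suc q, snd (w!q))" and c: "\<forall>j<q. fst (w!j) < fst (w!q)"
    unfolding T_def lw by blast
  show "x \<in> {x \<in> T w'. fst (snd x) \<le> p} \<union> {(Suc m, Suc p, snd (w!p))}"
  proof (cases "q = p")
    case True then show ?thesis using q big by simp
  next
    case False
    have "q < p"
    proof (rule ccontr)
      assume "\<not> q < p" then have "p < q" using False by simp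
      then show False using c[rule_format, of p] big small[of q] q False by auto
    qed
    then have "q < m" "w' ! q = w ! q" using pm nth'[of q] by auto
    moreover have "\<forall>j<q. fst (w'!j) < fst (w'!q)" using c nth' \<open>q < p\<close> \<open>q < m\<close> by auto
    ultimately have "x \<in> T w'" unfolding T_def lw' using q by auto
    then show ?thesis using q \<open>q < p\<close> by auto
  qed
next
  fix x assume "x \<in> {x \<in> T w'. fst (snd x) \<le> p} \<union> {(Suc m, Suc p, snd (w!p))}"
  then consider "x \<in> T w'" "fst (snd x) \<le> p" | "x = (Suc m, Suc p, snd (w!p))" by auto
  then show "x \<in> T w"
  proof cases
    case 2
    have "\<forall>j<p. fst (w!j) < fst (w!p)" using small big pm by auto
    then show ?thesis unfolding T_def lw using 2 big pm
      by (auto intro!: exI[of _ p])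
  next
    case 1
    then obtain q where q: "q < m" "x = (fst (w'!q), Suc q, snd (w'!q))" and c: "\<forall>j<q. fst (w'!j) < fst (w'!q)"
      unfolding T_def lw' by blast
    have qp: "q < p" using 1 q by auto
    then have "w' ! q = w ! q" using nth' q by auto
    moreover have "\<forall>j<q. fst (w!j) < fst (w!q)" using c nth' qp q by auto
    ultimately show ?thesis unfolding T_def lw using q by (auto intro!: exI[of _ q])
  qed
qed

end


definition S :: "(nat \<times> nat) list \<Rightarrow> (nat \<times> nat \<times> nat) set" where
  "S a = {(Suc k, fst (a!k), snd (a!k)) | k. k < length a \<and> (\<forall>j. k < j \<and> j < length a \<longrightarrow> fst (a!k) < fst (a!j))}"

lemma idx_snoc: "{k. k < Suc m \<and> P k} = {k. k < m \<and> P k} \<union> {k. k = m \<and> P k}"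
  by (auto simp: less_Suc_eq)

lemma Max_snoc: assumes m: "length a' = m"
  shows "Max_s (a' @ [y]) = Max_s a' \<union> (if fst y = Suc m then {(Suc m, snd y)} else {})"
proof -
  have e: "Max_s a = (\<lambda>k. (Suc k, snd (a!k))) ` {k. k < length a \<and> fst (a!k) = Suc k}" for a
    unfolding Max_s_def by blast
  have l: "length (a'@[y]) = Suc m" using m by simp
  have A: "(\<lambda>k. (Suc k, snd ((a'@[y])!k))) ` {k. k < m \<and> fst ((a'@[y])!k) = Suc k} = (\<lambda>k. (Suc k, snd (a'!k))) ` {k. k < m \<and> fst (a'!k) = Suc k}"
  proof -
    have "{k. k < m \<and> fst ((a'@[y])!k) = Suc k} = {k. k < m \<and> fst (a'!k) = Suc k}"
      using m by (auto simp: nth_append_left)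
    then show ?thesis using m by (auto simp: nth_append_left)
  qed
  have B: "(\<lambda>k. (Suc k, snd ((a'@[y])!k))) ` {k. k = m \<and> fst ((a'@[y])!k) = Suc k} = (if fst y = Suc m then {(Suc m, snd y)} else {})"
  proof -
    have "(a'@[y])!m = y" using m by (simp add: nth_append)
    then have "{k. k = m \<and> fst ((a'@[y])!k) = Suc k} = (if fst y = Suc m then {m} else {})" by auto
    then show ?thesis using \<open>(a'@[y])!m = y\<close> by simp
  qed
  show ?thesis unfolding e[of "a'@[y]"] e[of a'] l idx_snoc image_Un A B m ..
qed

lemma Min_snoc: assumes m: "length a' = m"
  shows "Min_s (a' @ [y]) = Min_s a' \<union> (if fst y = 1 then {(Suc m, snd y)} else {})"
proof -
  have e: "Min_s a = (\<lambda>k. (Suc k, snd (a!k))) ` {k. k < length a \<and> fst (a!k) = 1}" for a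
    unfolding Min_s_def by blast
  have l: "length (a'@[y]) = Suc m" using m by simp
  have A: "(\<lambda>k. (Suc k, snd ((a'@[y])!k))) ` {k. k < m \<and> fst ((a'@[y])!k) = 1} = (\<lambda>k. (Suc k, snd (a'!k))) ` {k. k < m \<and> fst (a'!k) = 1}"
  proof -
    have "{k. k < m \<and> fst ((a'@[y])!k) = 1} = {k. k < m \<and> fst (a'!k) = 1}"
      using m by (auto simp: nth_append_left)
    then show ?thesis using m by (auto simp: nth_append_left)
  qed
  have B: "(\<lambda>k. (Suc k, snd ((a'@[y])!k))) ` {k. k = m \<and> fst ((a'@[y])!k) = 1} = (if fst y = 1 then {(Suc m, snd y)} else {})"
  proof -
    have "(a'@[y])!m = y" using m by (simp add: nth_append)
    then have "{k. k = m \<and> fst ((a'@[y])!k) = 1} = (if fst y = 1 then {m} else {})" by auto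
    then show ?thesis using \<open>(a'@[y])!m = y\<close> by simp
  qed
  show ?thesis unfolding e[of "a'@[y]"] e[of a'] l idx_snoc image_Un A B m ..
qed

lemma S_snoc: assumes m: "length a' = m"
  shows "S (a' @ [y]) = {x \<in> S a'. fst (snd x) < fst y} \<union> {(Suc m, fst y, snd y)}"
proof -
  define K where "K a = {k. k < length a \<and> (\<forall>j. k < j \<and> j < length a \<longrightarrow> fst (a!k) < fst (a!j))}" for a :: "(nat \<times> nat) list"
  define g where "g a k = (Suc k, fst (a!k), snd (a!k))" for a :: "(nat \<times> nat) list" and k
  have e: "S a = g a ` K a" for a unfolding S_def K_def g_def by blast
  have ym: "(a'@[y])!m = y" using m by (simp add: nth_append)
  have lt: "k < m \<Longrightarrow> (a'@[y])!k = a'!k" for k using m by (simp add: nth_append)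
  have KK: "K (a'@[y]) = {k \<in> K a'. fst (a'!k) < fst y} \<union> {m}"
  proof (rule set_eqI, rule iffI)
    fix k assume "k \<in> K (a'@[y])"
    then have k: "k < Suc m" and c: "\<forall>j. k < j \<and> j < Suc m \<longrightarrow> fst ((a'@[y])!k) < fst ((a'@[y])!j)"
      unfolding K_def using m by simp_all
    show "k \<in> {k \<in> K a'. fst (a'!k) < fst y} \<union> {m}"
    proof (cases "k = m")
      case False
      then have km: "k < m" using k by simp
      have "fst (a'!k) < fst y" using c[rule_format, of m] km ym lt by simp
      moreover have "\<forall>j. k < j \<and> j < m \<longrightarrow> fst (a'!k) < fst (a'!j)"
      proof (intro allI impI)
        fix j assume j: "k < j \<and> j < m"
        then have "fst ((a'@[y])!k) < fst ((a'@[y])!j)" using c by simp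
        then show "fst (a'!k) < fst (a'!j)" using lt[of k] lt[of j] j km by simp
      qed
      ultimately show ?thesis unfolding K_def using km m by simp
    qed simp
  next
    fix k assume "k \<in> {k \<in> K a'. fst (a'!k) < fst y} \<union> {m}"
    then consider "k = m" | "k < m" "fst (a'!k) < fst y" "\<forall>j. k < j \<and> j < m \<longrightarrow> fst (a'!k) < fst (a'!j)"
      unfolding K_def using m by blast
    then show "k \<in> K (a'@[y])"
    proof cases
      case 1 then show ?thesis unfolding K_def using m by simp
    next
      case 2
      have "\<forall>j. k < j \<and> j < Suc m \<longrightarrow> fst ((a'@[y])!k) < fst ((a'@[y])!j)"
      proof (intro allI impI)
        fix j assume j: "k < j \<and> j < Suc m"
        show "fst ((a'@[y])!k) < fst ((a'@[y])!j)"
        proof (cases "j = m")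
          case True then show ?thesis using 2 ym lt by simp
        next
          case False then show ?thesis using 2 j lt by simp
        qed
      qed
      then show ?thesis unfolding K_def using m 2 by simp
    qed
  qed
  have A: "g (a'@[y]) ` {k \<in> K a'. fst (a'!k) < fst y} = {x \<in> S a'. fst (snd x) < fst y}"
  proof -
    have "g (a'@[y]) ` {k \<in> K a'. fst (a'!k) < fst y} = g a' ` {k \<in> K a'. fst (a'!k) < fst y}"
      by (rule image_cong) (auto simp: g_def K_def lt m)
    also have "\<dots> = {x \<in> S a'. fst (snd x) < fst y}" unfolding e g_def by auto
    finally show ?thesis .
  qed
  show ?thesis unfolding e[of "a'@[y]"] KK image_Un A using ym by (simp add: g_def)
qed

lemma setcomp_image: "{f k | k. P k} = f ` {k. P k}" by blast
lemma Rmil_s_S: "Rmil_s a = (\<lambda>(v,i,c). (i,c)) ` S a"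
  unfolding Rmil_s_def S_def setcomp_image image_comp by (simp add: comp_def case_prod_beta)
lemma Rmip_s_S: "Rmip_s a = (\<lambda>(v,i,c). (v,c)) ` S a"
  unfolding Rmip_s_def S_def setcomp_image image_comp by (simp add: comp_def case_prod_beta)
lemma Lmap_T: "Lmap_w w = (\<lambda>(v,i,c). (i,c)) ` T w"
  unfolding Lmap_w_def T_def setcomp_image image_comp by (simp add: comp_def case_prod_beta)
lemma Lmal_T: "Lmal_w w = (\<lambda>(v,i,c). (v,c)) ` T w"
  unfolding Lmal_w_def T_def setcomp_image image_comp by (simp add: comp_def case_prod_beta)

lemma acode_aux_length: "length (acode_aux w j) = j"
  by (induction w j rule: acode_aux.induct) (auto simp: Let_def)


lemma main_ind:
  "length w = n \<Longrightarrow> distinct (map fst w) \<Longrightarrow> set (map fst w) = {1..n} \<Longrightarrow>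
   Rmil_w w = Max_s (acode w) \<and> Lmil_w w = Min_s (acode w) \<and> T w = S (acode w)"
proof (induction n arbitrary: w)
  case 0
  then show ?case by (simp add: acode_def Rmil_w_def Max_s_def Lmil_w_def Min_s_def T_def S_def)
next
  case (Suc m)
  define p where "p = pos_of w (Suc m)"
  define w' where "w' = del_at p w"
  have "Suc m \<in> set (map fst w)" using Suc.prems by simp
  then have pp: "p < Suc m" "fst (w ! p) = Suc m" using pos_of_props[OF Suc.prems(2)] Suc.prems(1)
    unfolding p_def by auto
  have lw': "length w' = m" unfolding w'_def using del_at_length[of p w] pp Suc.prems(1) by simp
  have ds: "distinct (map fst w') \<and> set (map fst w') = set (map fst w) - {map fst w ! p}"
    unfolding w'_def del_at_map using del_at_distinct_set[of "map fst w" p] Suc.prems pp by simp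
  then have set': "set (map fst w') = {1..m}" using Suc.prems pp by auto
  have IH: "Rmil_w w' = Max_s (acode w') \<and> Lmil_w w' = Min_s (acode w') \<and> T w' = S (acode w')"
    using Suc.IH[OF lw'] ds set' by blast
  interpret stp w w' m p
  proof
    show "length w = Suc m" by (rule Suc.prems(1))
    show "length w' = m" by (rule lw')
    show "p \<le> m" using pp by simp
    show "w' ! i = w ! (if i < p then i else Suc i)" if "i < m" for i
      unfolding w'_def using del_at_nth[of p w i] that pp Suc.prems(1) by simp
    show "fst (w ! p) = Suc m" by (rule pp(2))
    show "fst (w ! i) < Suc m" if "i < Suc m" "i \<noteq> p" for i
    proof -
      have "fst (w ! i) \<in> {1..Suc m}" using that Suc.prems by (metis length_map nth_map nth_mem)
      moreover have "fst (w ! i) \<noteq> fst (w ! p)"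
        using that pp Suc.prems(1,2) by (metis nth_eq_iff_index_eq length_map nth_map)
      ultimately show ?thesis using pp by auto
    qed
  qed
  obtain z where wp: "w ! p = (Suc m, z)" using pp by (metis prod.collapse)
  have ac: "acode w = acode w' @ [(Suc p, z)]"
    unfolding acode_def using Suc.prems(1) lw' wp by (simp add: Let_def p_def w'_def)
  have la: "length (acode w') = m" unfolding acode_def using acode_aux_length lw' by simp
  have 1: "Rmil_w w = Max_s (acode w)"
    unfolding Rmil_step ac Max_snoc[OF la] wp using IH by simp
  have 2: "Lmil_w w = Min_s (acode w)"
    unfolding Lmil_step ac Min_snoc[OF la] wp using IH by simp
  have 3: "T w = S (acode w)"
    unfolding T_step ac S_snoc[OF la] wp using IH by auto
  show ?case using 1 2 3 by blast
qed

theorem lemma3p2: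
  fixes r n :: nat and \<pi> :: "(nat \<times> nat) list"
  assumes "colored_perm r n \<pi>"
  defines "a \<equiv> acode \<pi>"
  shows "\<forall>t<r.
     (Rmil_w \<pi> = Max_s a \<and> col_part (Rmil_w \<pi>) t = col_part (Max_s a) t) \<and>
     (Lmil_w \<pi> = Min_s a \<and> col_part (Lmil_w \<pi>) t = col_part (Min_s a) t) \<and>
     (Lmap_w \<pi> = Rmil_s a \<and> col_part (Lmap_w \<pi>) t = col_part (Rmil_s a) t) \<and>
     (Lmal_w \<pi> = Rmip_s a \<and> col_part (Lmal_w \<pi>) t = col_part (Rmip_s a) t)"
proof -
  have "Rmil_w \<pi> = Max_s a \<and> Lmil_w \<pi> = Min_s a \<and> T \<pi> = S a"
    using main_ind[of \<pi> n] assms unfolding colored_perm_def by auto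
  then have "Rmil_w \<pi> = Max_s a" "Lmil_w \<pi> = Min_s a" "Lmap_w \<pi> = Rmil_s a" "Lmal_w \<pi> = Rmip_s a"
    unfolding Lmap_T Rmil_s_S Lmal_T Rmip_s_S by auto
  then show ?thesis by simp
qed

end
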